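(* Let $M$ be a submanifold of the Euclidean space $\mathbb{E}^m$ with induced metric $g$, position vector field $\mathbf{x}=\mathbf{x}^T+\mathbf{x}^N$ (tangential and normal components), and let $\beta,\gamma,\delta$ be smooth functions on $M$. Then $(M,g,\mathbf{x}^T,\beta,\gamma,\delta)$ is a generalized soliton, i.e. $\frac12\mathcal{L}_{\mathbf{x}^T}g+\beta\,\mathrm{Ric}=\gamma g+\delta\,(\mathbf{x}^T)^\flat\otimes(\mathbf{x}^T)^\flat$, if and only if the Ricci tensor of $M$ satisfies $$\beta\,\mathrm{Ric}(X,Y)=(\gamma-1)g(X,Y)+\delta\,g(\mathbf{x}^T,X)g(\mathbf{x}^T,Y)-g(A_{\mathbf{x}^N}X,Y)$$ for all vector fields $X,Y$ tangent to $M$.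
   Context: $A_\zeta$ denotes the shape operator of $M$ in $\mathbb{E}^m$ with respect to a normal vector field $\zeta$, defined by the Weingarten formula $\widetilde\nabla_X\zeta=-A_\zeta X+D_X\zeta$ ($\widetilde\nabla$ the Euclidean connection, $D$ the normal connection). $(\mathbf{x}^T)^\flat=g(\mathbf{x}^T,\cdot)$. *)

theory Defs
  imports "HOL-Analysis.Analysis"
begin

text \<open>A submanifold M of E^m is described locally by a smooth embedded patch
  phi : U subset R^n -> R^m (U open).  All tensors are expressed by their
  components in the coordinate frame d_i = pd phi i.  Functions on M are pulled
  back to U.\<close>

definition pd :: "(real^'n \<Rightarrow> 'a::real_normed_vector) \<Rightarrow> 'n \<Rightarrow> real^'n \<Rightarrow> 'a" where
  "pd f i u = frechet_derivative f (at u) (axis i 1)"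

fun iter_pd :: "'n list \<Rightarrow> (real^'n \<Rightarrow> 'a::real_normed_vector) \<Rightarrow> real^'n \<Rightarrow> 'a" where
  "iter_pd [] f = f"
| "iter_pd (j # js) f = pd (iter_pd js f) j"

definition Cinf_on :: "(real^'n) set \<Rightarrow> (real^'n \<Rightarrow> 'a::real_normed_vector) \<Rightarrow> bool" where
  "Cinf_on U f \<longleftrightarrow> (\<forall>js. iter_pd js f differentiable_on U)"

definition metric :: "(real^'n \<Rightarrow> real^'m) \<Rightarrow> 'n \<Rightarrow> 'n \<Rightarrow> real^'n \<Rightarrow> real" where
  "metric \<phi> i j u = pd \<phi> i u \<bullet> pd \<phi> j u"

definition ginv :: "(real^'n \<Rightarrow> real^'m) \<Rightarrow> real^'n \<Rightarrow> 'n \<Rightarrow> 'n \<Rightarrow> real" where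
  "ginv \<phi> u k l = matrix_inv (\<chi> i j. metric \<phi> i j u) $ k $ l"

definition chr :: "(real^'n \<Rightarrow> real^'m) \<Rightarrow> 'n \<Rightarrow> 'n \<Rightarrow> 'n \<Rightarrow> real^'n \<Rightarrow> real" where
  "chr \<phi> k i j u = 1/2 * (\<Sum>l\<in>UNIV. ginv \<phi> u k l *
      (pd (metric \<phi> j l) i u + pd (metric \<phi> i l) j u - pd (metric \<phi> i j) l u))"

text \<open>R(d_i,d_j)d_k = sum_l R^l_ijk d_l, with R(X,Y) = nabla_X nabla_Y - nabla_Y nabla_X - nabla_[X,Y].\<close>
definition riem :: "(real^'n \<Rightarrow> real^'m) \<Rightarrow> 'n \<Rightarrow> 'n \<Rightarrow> 'n \<Rightarrow> 'n \<Rightarrow> real^'n \<Rightarrow> real" where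
  "riem \<phi> l i j k u = pd (chr \<phi> l j k) i u - pd (chr \<phi> l i k) j u
     + (\<Sum>p\<in>UNIV. chr \<phi> p j k u * chr \<phi> l i p u - chr \<phi> p i k u * chr \<phi> l j p u)"

definition ric :: "(real^'n \<Rightarrow> real^'m) \<Rightarrow> 'n \<Rightarrow> 'n \<Rightarrow> real^'n \<Rightarrow> real" where
  "ric \<phi> j k u = (\<Sum>i\<in>UNIV. riem \<phi> i i j k u)"

definition tcoef :: "(real^'n \<Rightarrow> real^'m) \<Rightarrow> 'n \<Rightarrow> real^'n \<Rightarrow> real" where
  "tcoef \<phi> i u = (\<Sum>j\<in>UNIV. ginv \<phi> u i j * (\<phi> u \<bullet> pd \<phi> j u))"

definition xT :: "(real^'n \<Rightarrow> real^'m) \<Rightarrow> real^'n \<Rightarrow> real^'m" where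
  "xT \<phi> u = (\<Sum>i\<in>UNIV. tcoef \<phi> i u *\<^sub>R pd \<phi> i u)"

definition xN :: "(real^'n \<Rightarrow> real^'m) \<Rightarrow> real^'n \<Rightarrow> real^'m" where
  "xN \<phi> u = \<phi> u - xT \<phi> u"

definition lie_xT :: "(real^'n \<Rightarrow> real^'m) \<Rightarrow> 'n \<Rightarrow> 'n \<Rightarrow> real^'n \<Rightarrow> real" where
  "lie_xT \<phi> i j u = (\<Sum>k\<in>UNIV. tcoef \<phi> k u * pd (metric \<phi> i j) k u
      + metric \<phi> k j u * pd (tcoef \<phi> k) i u + metric \<phi> i k u * pd (tcoef \<phi> k) j u)"

text \<open>g(A_{x^N} d_i, d_j), where A_xi X = -(tangential part of D~_X xi) (Weingarten).\<close>
definition shape_xN :: "(real^'n \<Rightarrow> real^'m) \<Rightarrow> 'n \<Rightarrow> 'n \<Rightarrow> real^'n \<Rightarrow> real" where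
  "shape_xN \<phi> i j u = - (pd (xN \<phi>) i u \<bullet> pd \<phi> j u)"

end

theory Submission
  imports Defs
begin

lemma pd_at: "(f has_derivative f') (at u) \<Longrightarrow> pd f i u = f' (axis i 1)"
  by (simp add: pd_def frechet_derivative_at[symmetric])

lemma pd_cong_open:
  assumes "open U" "u \<in> U" "\<And>w. w \<in> U \<Longrightarrow> f w = g w"
  shows "pd f i u = pd g i u"
proof -
  have "\<And>f'. (f has_derivative f') (at u) \<longleftrightarrow> (g has_derivative f') (at u)"
    using has_derivative_transform_within_open[OF _ assms(1,2), of f _ UNIV g]
      has_derivative_transform_within_open[OF _ assms(1,2), of g _ UNIV f] assms(3)
    by metis
  then show ?thesis unfolding pd_def frechet_derivative_def by simp
qed

lemma pd_inner:
  assumes "f differentiable at u" "g differentiable at u"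
  shows "pd (\<lambda>w. f w \<bullet> g w) i u = pd f i u \<bullet> g u + f u \<bullet> pd g i u"
proof -
  have "(f has_derivative frechet_derivative f (at u)) (at u)" "(g has_derivative frechet_derivative g (at u)) (at u)"
    using assms frechet_derivative_works by blast+
  from pd_at[OF has_derivative_inner[OF this], of i] show ?thesis
    by (simp add: pd_def inner_commute add.commute)
qed

lemma pd_scaleR:
  assumes "c differentiable at u" "f differentiable at u"
  shows "pd (\<lambda>w. c w *\<^sub>R f w) i u = pd c i u *\<^sub>R f u + c u *\<^sub>R pd f i u"
proof -
  have "(c has_derivative frechet_derivative c (at u)) (at u)" "(f has_derivative frechet_derivative f (at u)) (at u)"
    using assms frechet_derivative_works by blast+
  from pd_at[OF has_derivative_scaleR[OF this], of i] show ?thesis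
    by (simp add: pd_def add.commute)
qed

lemma pd_sum:
  assumes "\<And>k. k \<in> S \<Longrightarrow> f k differentiable at u"
  shows "pd (\<lambda>w. \<Sum>k\<in>S. f k w) i u = (\<Sum>k\<in>S. pd (f k) i u)"
proof -
  have "\<And>k. k \<in> S \<Longrightarrow> (f k has_derivative frechet_derivative (f k) (at u)) (at u)"
    using assms frechet_derivative_works by blast
  from has_derivative_sum[OF this] show ?thesis unfolding pd_def
    by (subst pd_at[unfolded pd_def]) auto
qed

lemma pd_diff:
  assumes "f differentiable at u" "g differentiable at u"
  shows "pd (\<lambda>w. f w - g w) i u = pd f i u - pd g i u"
proof -
  have "(f has_derivative frechet_derivative f (at u)) (at u)" "(g has_derivative frechet_derivative g (at u)) (at u)"
    using assms frechet_derivative_works by blast+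
  from has_derivative_diff[OF this] show ?thesis unfolding pd_def
    by (subst pd_at[unfolded pd_def]) auto
qed

lemma pd_const: "pd (\<lambda>w. c) i u = 0"
  by (subst pd_at[OF has_derivative_const]) simp

lemma pd_component:
  assumes "f differentiable at u"
  shows "pd (\<lambda>w. f w $ k) i u = pd f i u $ k"
proof -
  have "(f has_derivative frechet_derivative f (at u)) (at u)"
    using assms frechet_derivative_works by blast+
  from bounded_linear.has_derivative[OF bounded_linear_vec_nth this] show ?thesis unfolding pd_def
    by (subst pd_at[unfolded pd_def]) auto
qed

lemma det_differentiable:
  fixes F :: "'n::finite \<Rightarrow> 'n \<Rightarrow> real^'k \<Rightarrow> real"
  assumes "\<And>i j. F i j differentiable at u"
  shows "(\<lambda>w. det (\<chi> i j. F i j w)) differentiable at u"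
proof -
  have hp: "\<And>p. (\<lambda>w. \<Prod>i\<in>UNIV. F i (p i) w) differentiable at u"
  proof -
    fix p :: "'n \<Rightarrow> 'n"
    have h: "\<And>i. i \<in> UNIV \<Longrightarrow> (F i (p i) has_derivative frechet_derivative (F i (p i)) (at u)) (at u)"
      using assms frechet_derivative_works by blast
    show "(\<lambda>w. \<Prod>i\<in>UNIV. F i (p i) w) differentiable at u"
      by (rule differentiableI[OF has_derivative_prod[OF h]])
  qed
  have "(\<lambda>w. \<Sum>p\<in>{p. p permutes (UNIV::'n set)}. of_int (sign p) * (\<Prod>i\<in>UNIV. F i (p i) w)) differentiable at u"
    apply (rule differentiable_sum)
     apply (simp add: finite_permutations)
    apply (intro ballI differentiable_mult[OF differentiable_const] hp)
    done
  moreover have "(\<lambda>w. det (\<chi> i j. F i j w)) = (\<lambda>w. \<Sum>p\<in>{p. p permutes (UNIV::'n set)}. of_int (sign p) * (\<Prod>i\<in>UNIV. F i (p i) w))"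
    unfolding det_def by (simp only: vec_lambda_beta)
  ultimately show ?thesis by simp
qed

lemma differentiable_cong_open:
  assumes "open U" "u \<in> U" "\<And>w. w \<in> U \<Longrightarrow> f w = g w" "f differentiable at u"
  shows "g differentiable at u"
  using assms has_derivative_transform_within_open unfolding differentiable_def by metis

lemma schwarz_half:
  fixes f :: "real^'n \<Rightarrow> real" and d :: "real^'n"
  assumes ball: "\<And>y. norm (y - u) < r \<Longrightarrow> f differentiable at y"
    and L: "bounded_linear L"
    and approx: "\<And>y. norm (y - u) < r \<Longrightarrow> norm (pd f i y - pd f i u - L (y - u)) \<le> \<epsilon> * norm (y - u)"
    and h: "0 < h" "2*h < r" and nd: "norm d = 1" and eps: "\<epsilon> \<ge> 0"
  shows "\<bar>f (u + h *\<^sub>R axis i 1 + h *\<^sub>R d) - f (u + h *\<^sub>R axis i 1) - f (u + h *\<^sub>R d) + f u - h^2 * L d\<bar> \<le> 3 * \<epsilon> * h^2"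
proof -
  define e where "e = (axis i 1 :: real^'n)"
  have ne: "norm e = 1" unfolding e_def by simp
  define g where "g s = f (u + s *\<^sub>R e + h *\<^sub>R d) - f (u + s *\<^sub>R e)" for s
  define g' where "g' s = pd f i (u + s *\<^sub>R e + h *\<^sub>R d) - pd f i (u + s *\<^sub>R e)" for s
  have nrm1: "norm ((u + s *\<^sub>R e + h *\<^sub>R d) - u) \<le> s + h" if "0 \<le> s" for s
  proof -
    have "norm ((u + s *\<^sub>R e + h *\<^sub>R d) - u) = norm (s *\<^sub>R e + h *\<^sub>R d)" by (simp add: algebra_simps)
    also have "\<dots> \<le> norm (s *\<^sub>R e) + norm (h *\<^sub>R d)" by (rule norm_triangle_ineq)
    also have "\<dots> = s + h" using that h ne nd by simp
    finally show ?thesis .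
  qed
  have nrm2: "norm ((u + s *\<^sub>R e) - u) = s" if "0 \<le> s" for s
    using that ne by simp
  have der: "DERIV g s :> g' s" if s: "0 \<le> s" "s \<le> h" for s
  proof -
    define y1 where "y1 = u + s *\<^sub>R e + h *\<^sub>R d"
    define y2 where "y2 = u + s *\<^sub>R e"
    have "norm (y1 - u) < r" using nrm1[OF s(1)] s h unfolding y1_def by linarith
    then have D1: "(f has_derivative frechet_derivative f (at y1)) (at y1)"
      using ball frechet_derivative_works by blast
    have "norm (y2 - u) < r" using nrm2[OF s(1)] s h unfolding y2_def by linarith
    then have D2: "(f has_derivative frechet_derivative f (at y2)) (at y2)"
      using ball frechet_derivative_works by blast
    have c1: "((\<lambda>s. u + s *\<^sub>R e + h *\<^sub>R d) has_derivative (\<lambda>t. t *\<^sub>R e)) (at s)"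
      by (auto intro!: derivative_eq_intros)
    have c2: "((\<lambda>s. u + s *\<^sub>R e) has_derivative (\<lambda>t. t *\<^sub>R e)) (at s)"
      by (auto intro!: derivative_eq_intros)
    have E1: "((\<lambda>s. f (u + s *\<^sub>R e + h *\<^sub>R d)) has_derivative (\<lambda>t. frechet_derivative f (at y1) (t *\<^sub>R e))) (at s)"
      using has_derivative_compose[OF c1, of f] D1 unfolding y1_def by simp
    have E2: "((\<lambda>s. f (u + s *\<^sub>R e)) has_derivative (\<lambda>t. frechet_derivative f (at y2) (t *\<^sub>R e))) (at s)"
      using has_derivative_compose[OF c2, of f] D2 unfolding y2_def by simp
    have l1: "\<And>t. frechet_derivative f (at y1) (t *\<^sub>R e) = t * pd f i y1"
      using linear_cmul[OF has_derivative_linear[OF D1]] unfolding pd_def e_def by simp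
    have l2: "\<And>t. frechet_derivative f (at y2) (t *\<^sub>R e) = t * pd f i y2"
      using linear_cmul[OF has_derivative_linear[OF D2]] unfolding pd_def e_def by simp
    have "(g has_derivative (\<lambda>t. t * pd f i y1 - t * pd f i y2)) (at s)"
      using has_derivative_diff[OF E1 E2] unfolding g_def[abs_def] l1 l2 .
    then show ?thesis unfolding has_field_derivative_def g'_def
      by (rule has_derivative_eq_rhs) (simp add: fun_eq_iff y1_def y2_def algebra_simps)
  qed
  obtain z where z: "0 < z" "z < h" "g h - g 0 = (h - 0) * g' z"
    using MVT2[of 0 h g g'] der h by auto
  have Lz: "L (z *\<^sub>R e + h *\<^sub>R d) - L (z *\<^sub>R e) = h * L d"
    using linear_add[OF bounded_linear.linear[OF L]] linear_cmul[OF bounded_linear.linear[OF L]] by simp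
  define R1 where "R1 = pd f i (u + z *\<^sub>R e + h *\<^sub>R d) - pd f i u - L ((u + z *\<^sub>R e + h *\<^sub>R d) - u)"
  define R2 where "R2 = pd f i (u + z *\<^sub>R e) - pd f i u - L ((u + z *\<^sub>R e) - u)"
  have q1: "g' z - h * L d = R1 - R2"
    unfolding R1_def R2_def g'_def using Lz by (simp add: algebra_simps)
  have q2: "\<bar>R1\<bar> \<le> \<epsilon> * (z + h)"
  proof -
    have n: "norm ((u + z *\<^sub>R e + h *\<^sub>R d) - u) < r" using nrm1[of z] z h by linarith
    have "\<bar>R1\<bar> \<le> \<epsilon> * norm ((u + z *\<^sub>R e + h *\<^sub>R d) - u)" using approx[OF n] unfolding R1_def by (metis real_norm_def)
    also have "\<dots> \<le> \<epsilon> * (z + h)" using nrm1[of z] z eps by (intro mult_left_mono) auto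
    finally show ?thesis .
  qed
  have q3: "\<bar>R2\<bar> \<le> \<epsilon> * z"
  proof -
    have n: "norm ((u + z *\<^sub>R e) - u) < r" using nrm2[of z] z h by linarith
    have "\<bar>R2\<bar> \<le> \<epsilon> * norm ((u + z *\<^sub>R e) - u)" using approx[OF n] unfolding R2_def by (metis real_norm_def)
    then show ?thesis using nrm2[of z] z by simp
  qed
  have B: "\<bar>g' z - h * L d\<bar> \<le> 3 * \<epsilon> * h"
  proof -
    have a: "\<epsilon> * z \<le> \<epsilon> * h" using z eps by (simp add: mult_left_mono)
    note t = abs_triangle_ineq4[of R1 R2]
    show ?thesis using q1 q2 q3 a t by (simp add: ring_distribs)
  qed
  have "f (u + h *\<^sub>R e + h *\<^sub>R d) - f (u + h *\<^sub>R e) - f (u + h *\<^sub>R d) + f u - h^2 * L d = h * (g' z - h * L d)"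
    using z(3) unfolding g_def by (simp add: power2_eq_square algebra_simps)
  also have "\<bar>\<dots>\<bar> \<le> h * (3 * \<epsilon> * h)" using B h by (simp add: abs_mult)
  finally show ?thesis unfolding e_def by (simp add: power2_eq_square algebra_simps)
qed


lemma schwarz_scalar:
  fixes f :: "real^'n \<Rightarrow> real"
  assumes U: "open U" "u \<in> U" and fd: "\<And>y. y \<in> U \<Longrightarrow> f differentiable at y"
    and di: "pd f i differentiable at u" and dj: "pd f j differentiable at u"
  shows "pd (pd f i) j u = pd (pd f j) i u"
proof -
  define Li where "Li = frechet_derivative (pd f i) (at u)"
  define Lj where "Lj = frechet_derivative (pd f j) (at u)"
  have Di: "(pd f i has_derivative Li) (at u)" using di frechet_derivative_works Li_def by blast
  have Dj: "(pd f j has_derivative Lj) (at u)" using dj frechet_derivative_works Lj_def by blast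
  obtain r0 where r0: "r0 > 0" "ball u r0 \<subseteq> U" using U open_contains_ball by blast
  define X where "X = Li (axis j 1) - Lj (axis i 1)"
  have key: "\<bar>X\<bar> \<le> 6 * \<epsilon>" if eps: "\<epsilon> > 0" for \<epsilon>
  proof -
    obtain r1 where r1: "r1 > 0" "\<And>y. norm (y - u) < r1 \<Longrightarrow> norm (pd f i y - pd f i u - Li (y - u)) \<le> \<epsilon> * norm (y - u)"
      using Di eps unfolding has_derivative_at_alt by blast
    obtain r2 where r2: "r2 > 0" "\<And>y. norm (y - u) < r2 \<Longrightarrow> norm (pd f j y - pd f j u - Lj (y - u)) \<le> \<epsilon> * norm (y - u)"
      using Dj eps unfolding has_derivative_at_alt by blast
    define r where "r = min r0 (min r1 r2)"
    define h where "h = r / 4"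
    have rpos: "r > 0" using r0 r1 r2 r_def by simp
    have h: "0 < h" "2 * h < r" using rpos h_def by auto
    have ball: "f differentiable at y" if "norm (y - u) < r" for y
    proof -
      have "y \<in> ball u r0" using that r_def by (simp add: dist_norm norm_minus_commute)
      then show ?thesis using r0 fd by blast
    qed
    have A1: "\<bar>f (u + h *\<^sub>R axis i 1 + h *\<^sub>R axis j 1) - f (u + h *\<^sub>R axis i 1) - f (u + h *\<^sub>R axis j 1) + f u - h^2 * Li (axis j 1)\<bar> \<le> 3 * \<epsilon> * h^2"
      by (rule schwarz_half[OF ball has_derivative_bounded_linear[OF Di] _ h]) (use r1 r_def eps in auto)
    have A2: "\<bar>f (u + h *\<^sub>R axis j 1 + h *\<^sub>R axis i 1) - f (u + h *\<^sub>R axis j 1) - f (u + h *\<^sub>R axis i 1) + f u - h^2 * Lj (axis i 1)\<bar> \<le> 3 * \<epsilon> * h^2"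
      by (rule schwarz_half[OF ball has_derivative_bounded_linear[OF Dj] _ h]) (use r2 r_def eps in auto)
    have pe: "u + h *\<^sub>R axis j 1 + h *\<^sub>R axis i 1 = u + h *\<^sub>R axis i 1 + h *\<^sub>R axis j 1" by (simp add: algebra_simps)
    define D where "D = f (u + h *\<^sub>R axis i 1 + h *\<^sub>R axis j 1) - f (u + h *\<^sub>R axis i 1) - f (u + h *\<^sub>R axis j 1) + f u"
    have B1: "\<bar>D - h^2 * Li (axis j 1)\<bar> \<le> 3 * \<epsilon> * h^2" using A1 unfolding D_def .
    have B2: "\<bar>D - h^2 * Lj (axis i 1)\<bar> \<le> 3 * \<epsilon> * h^2" using A2 unfolding D_def pe by (simp add: algebra_simps)
    have "h^2 * X = (D - h^2 * Lj (axis i 1)) - (D - h^2 * Li (axis j 1))" unfolding X_def by (simp add: algebra_simps)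
    then have "\<bar>h^2 * X\<bar> \<le> \<bar>D - h^2 * Lj (axis i 1)\<bar> + \<bar>D - h^2 * Li (axis j 1)\<bar>" using abs_triangle_ineq4 by metis
    moreover have "h^2 * (6 * \<epsilon>) = 3 * \<epsilon> * h^2 + 3 * \<epsilon> * h^2" by (simp add: algebra_simps)
    moreover have "\<bar>h^2 * X\<bar> = h^2 * \<bar>X\<bar>" by (simp add: abs_mult)
    ultimately have "h^2 * \<bar>X\<bar> \<le> h^2 * (6 * \<epsilon>)" using B1 B2 by linarith
    then show ?thesis using h by simp
  qed
  have "X = 0"
  proof (rule ccontr)
    assume "X \<noteq> 0"
    then have "\<bar>X\<bar> \<le> 6 * (\<bar>X\<bar> / 12)" using key[of "\<bar>X\<bar>/12"] by simp
    then show False using \<open>X \<noteq> 0\<close> by simp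
  qed
  then show ?thesis unfolding pd_def Li_def Lj_def X_def by simp
qed

lemma differentiable_component:
  assumes "f differentiable at u"
  shows "(\<lambda>w. f w $ k) differentiable at u"
proof -
  have "(f has_derivative frechet_derivative f (at u)) (at u)"
    using assms frechet_derivative_works by blast
  from bounded_linear.has_derivative[OF bounded_linear_vec_nth this] show ?thesis
    by (rule differentiableI)
qed

lemma schwarz_vec:
  fixes \<phi> :: "real^'n \<Rightarrow> real^'m"
  assumes U: "open U" "u \<in> U" and d0: "\<And>y. y \<in> U \<Longrightarrow> \<phi> differentiable at y"
    and di: "\<And>y. y \<in> U \<Longrightarrow> pd \<phi> i differentiable at y"
    and dj: "\<And>y. y \<in> U \<Longrightarrow> pd \<phi> j differentiable at y"
  shows "pd (pd \<phi> i) j u = pd (pd \<phi> j) i u"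
proof (rule vec_eq_iff[THEN iffD2], rule allI)
  fix k
  define f where "f w = \<phi> w $ k" for w
  have fd: "\<And>y. y \<in> U \<Longrightarrow> f differentiable at y"
    unfolding f_def[abs_def] using d0 by (auto intro: differentiable_component)
  have e: "\<And>l w. w \<in> U \<Longrightarrow> pd \<phi> l w $ k = pd f l w"
    unfolding f_def[abs_def] using pd_component[OF d0] by simp
  have "pd (pd \<phi> i) j u $ k = pd (\<lambda>w. pd \<phi> i w $ k) j u" using pd_component[OF di[OF U(2)], of k j] by simp
  also have "\<dots> = pd (pd f i) j u" by (rule pd_cong_open[OF U]) (simp add: e)
  also have "\<dots> = pd (pd f j) i u"
  proof (rule schwarz_scalar[OF U fd])
    show "pd f i differentiable at u"
      by (rule differentiable_cong_open[OF U _ differentiable_component[OF di[OF U(2)], of k]]) (simp add: e)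
    show "pd f j differentiable at u"
      by (rule differentiable_cong_open[OF U _ differentiable_component[OF dj[OF U(2)], of k]]) (simp add: e)
  qed
  also have "\<dots> = pd (\<lambda>w. pd \<phi> j w $ k) i u" by (rule pd_cong_open[OF U]) (simp add: e)
  also have "\<dots> = pd (pd \<phi> j) i u $ k" using pd_component[OF dj[OF U(2)], of k i] by simp
  finally show "pd (pd \<phi> i) j u $ k = pd (pd \<phi> j) i u $ k" .
qed

lemma gram_inj:
  fixes \<phi> :: "real^'n \<Rightarrow> real^'m"
  assumes d: "\<phi> differentiable at w" and inj: "inj (frechet_derivative \<phi> (at w))"
  shows "inj ((*v) (\<chi> i j. metric \<phi> i j w))"
proof -
  let ?G = "(\<chi> i j. metric \<phi> i j w)"
  let ?D = "frechet_derivative \<phi> (at w)"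
  have lin: "linear ?D" using has_derivative_linear d frechet_derivative_works by blast
  have Dx: "?D x = (\<Sum>i\<in>UNIV. x $ i *\<^sub>R pd \<phi> i w)" for x
  proof -
    have "?D x = ?D (\<Sum>i\<in>UNIV. x $ i *\<^sub>R axis i 1)"
      using basis_expansion[of x] by (simp add: scalar_mult_eq_scaleR)
    also have "\<dots> = (\<Sum>i\<in>UNIV. x $ i *\<^sub>R ?D (axis i 1))"
      by (simp add: linear_sum[OF lin] linear_cmul[OF lin])
    finally show ?thesis unfolding pd_def .
  qed
  have quad: "x \<bullet> (?G *v x) = ?D x \<bullet> ?D x" for x
    unfolding Dx inner_sum_left inner_sum_right
    by (simp add: matrix_vector_mult_def inner_vec_def metric_def sum_distrib_left mult.commute mult.left_commute)
  show ?thesis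
  proof (rule linear_injective_0[THEN iffD2])
    show "linear ((*v) ?G)" by (simp add: matrix_vector_mul_linear)
    show "\<forall>x. ?G *v x = 0 \<longrightarrow> x = 0"
    proof (intro allI impI)
      fix x assume "?G *v x = 0"
      then have "?D x \<bullet> ?D x = 0" using quad[of x] by simp
      then have "?D x = 0" by simp
      then have "?D x = ?D 0" using linear_0[OF lin] by simp
      then show "x = 0" using inj injD by metis
    qed
  qed
qed

lemma inj_matrix_inv:
  fixes A :: "real^'n^'n"
  assumes "inj ((*v) A)"
  shows "A ** matrix_inv A = mat 1" "matrix_inv A ** A = mat 1" "det A \<noteq> 0"
proof -
  obtain B where B: "B ** A = mat 1" using assms matrix_left_invertible_injective by blast
  then have "A ** B = mat 1" using matrix_left_right_inverse by blast
  with B have inv: "invertible A" unfolding invertible_def by blast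
  then have "\<exists>A'. A ** A' = mat 1 \<and> A' ** A = mat 1" unfolding invertible_def by blast
  then have "A ** matrix_inv A = mat 1 \<and> matrix_inv A ** A = mat 1"
    unfolding matrix_inv_def by (rule someI_ex)
  then show "A ** matrix_inv A = mat 1" "matrix_inv A ** A = mat 1" by auto
  show "det A \<noteq> 0" using inv invertible_det_nz by blast
qed

theorem theorem5p2:
  fixes \<phi> :: "real^'n \<Rightarrow> real^'m" and U :: "(real^'n) set"
    and \<beta> \<gamma> \<delta> :: "real^'n \<Rightarrow> real"
  assumes "open U" and "Cinf_on U \<phi>" and "inj_on \<phi> U"
    and "\<forall>u\<in>U. inj (frechet_derivative \<phi> (at u))"
    and "Cinf_on U \<beta>" and "Cinf_on U \<gamma>" and "Cinf_on U \<delta>"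
  shows "(\<forall>u\<in>U. \<forall>i j. lie_xT \<phi> i j u / 2 + \<beta> u * ric \<phi> i j u
             = \<gamma> u * metric \<phi> i j u + \<delta> u * (xT \<phi> u \<bullet> pd \<phi> i u) * (xT \<phi> u \<bullet> pd \<phi> j u))
     \<longleftrightarrow> (\<forall>u\<in>U. \<forall>i j. \<beta> u * ric \<phi> i j u
             = (\<gamma> u - 1) * metric \<phi> i j u + \<delta> u * (xT \<phi> u \<bullet> pd \<phi> i u) * (xT \<phi> u \<bullet> pd \<phi> j u)
               - shape_xN \<phi> i j u)"
proof -
  note U = assms(1)
  have cinf: "iter_pd js \<phi> differentiable at w" if "w \<in> U" for js w
    using assms(2) that differentiable_on_eq_differentiable_at[OF U] unfolding Cinf_on_def by blast
  have d0: "\<And>w. w \<in> U \<Longrightarrow> \<phi> differentiable at w" using cinf[of _ "[]"] by simp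
  have d1: "\<And>i w. w \<in> U \<Longrightarrow> pd \<phi> i differentiable at w" using cinf[of _ "[i]" for i] by simp
  have sw: "\<And>i j w. w \<in> U \<Longrightarrow> pd (pd \<phi> i) j w = pd (pd \<phi> j) i w"
    by (rule schwarz_vec[OF U _ d0 d1 d1])
  have metric_eq: "\<And>i j. metric \<phi> i j = (\<lambda>w. pd \<phi> i w \<bullet> pd \<phi> j w)" by (simp add: fun_eq_iff metric_def)
  have msym: "\<And>i j w. metric \<phi> i j w = metric \<phi> j i w" by (simp add: metric_def inner_commute)
  have dmet: "\<And>i j w. w \<in> U \<Longrightarrow> metric \<phi> i j differentiable at w" unfolding metric_eq by (simp add: d1)
  define G where "G w = (\<chi> i j. metric \<phi> i j w)" for w
  define bv where "bv w = (\<chi> j. \<phi> w \<bullet> pd \<phi> j w)" for w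
  have Ginv: "G w ** matrix_inv (G w) = mat 1" "det (G w) \<noteq> 0" if "w \<in> U" for w
    using inj_matrix_inv[OF gram_inj[OF d0[OF that] assms(4)[rule_format, OF that]]] unfolding G_def by auto
  have tc: "\<And>k w. tcoef \<phi> k w = (matrix_inv (G w) *v bv w) $ k"
    by (simp add: tcoef_def ginv_def G_def bv_def matrix_vector_mult_def)
  have Gtc: "G w *v (matrix_inv (G w) *v bv w) = bv w" if "w \<in> U" for w
    by (simp add: matrix_vector_mul_assoc Ginv[OF that])
  have tc_cramer: "tcoef \<phi> k w = det (\<chi> i j. if j = k then bv w $ i else G w $ i $ j) / det (G w)"
    if "w \<in> U" for k w
    using cramer[OF Ginv(2)[OF that], of "matrix_inv (G w) *v bv w" "bv w"] Gtc[OF that] tc[of k w] by simp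
  have dtc: "tcoef \<phi> k differentiable at w" if w: "w \<in> U" for k w
  proof -
    have F: "\<And>i j. (\<lambda>w. if j = k then \<phi> w \<bullet> pd \<phi> i w else metric \<phi> i j w) differentiable at w"
      subgoal for i j by (cases "j = k") (simp_all add: d0 d1 dmet w)
      done
    have num: "(\<lambda>w. det (\<chi> i j. if j = k then bv w $ i else G w $ i $ j)) differentiable at w"
    proof -
      have "(\<lambda>w. det (\<chi> i j. if j = k then bv w $ i else G w $ i $ j)) = (\<lambda>w. det (\<chi> i j. if j = k then \<phi> w \<bullet> pd \<phi> i w else metric \<phi> i j w))"
        unfolding bv_def G_def by (rule ext) (simp only: vec_lambda_beta)
      then show ?thesis using det_differentiable[of "\<lambda>i j w. if j = k then \<phi> w \<bullet> pd \<phi> i w else metric \<phi> i j w", OF F]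
        by simp
    qed
    have den: "(\<lambda>w. det (G w)) differentiable at w"
      unfolding G_def by (rule det_differentiable[OF dmet[OF w]])
    have "(\<lambda>w. det (\<chi> i j. if j = k then bv w $ i else G w $ i $ j) / det (G w)) differentiable at w"
      by (rule differentiable_divide[OF num den Ginv(2)[OF w]])
    then show ?thesis
      by (rule differentiable_cong_open[OF U w, rotated]) (simp add: tc_cramer)
  qed
  have xT_eq: "xT \<phi> = (\<lambda>w. \<Sum>k\<in>UNIV. tcoef \<phi> k w *\<^sub>R pd \<phi> k w)" by (simp add: fun_eq_iff xT_def)
  have dxT: "xT \<phi> differentiable at w" if w: "w \<in> U" for w
    unfolding xT_eq by (rule differentiable_sum) (simp_all add: dtc[OF w] d1[OF w])
  have xN_eq: "xN \<phi> = (\<lambda>w. \<phi> w - xT \<phi> w)" by (simp add: fun_eq_iff xN_def)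
  have dxN: "xN \<phi> differentiable at w" if w: "w \<in> U" for w
    unfolding xN_eq using d0[OF w] dxT[OF w] by simp
  have xTorth: "xT \<phi> w \<bullet> pd \<phi> j w = \<phi> w \<bullet> pd \<phi> j w" if w: "w \<in> U" for j w
  proof -
    have "xT \<phi> w \<bullet> pd \<phi> j w = (\<Sum>k\<in>UNIV. tcoef \<phi> k w * metric \<phi> k j w)"
      unfolding xT_def inner_sum_left by (simp add: metric_def)
    also have "\<dots> = (\<Sum>k\<in>UNIV. G w $ j $ k * (matrix_inv (G w) *v bv w) $ k)"
      apply (rule sum.cong[OF refl])
      subgoal for k by (simp only: tc[symmetric]) (simp add: G_def msym[of k j w])
      done
    also have "\<dots> = (G w *v (matrix_inv (G w) *v bv w)) $ j" by (simp add: matrix_vector_mult_def)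
    also have "\<dots> = \<phi> w \<bullet> pd \<phi> j w" using Gtc[OF w] by (simp add: bv_def)
    finally show ?thesis .
  qed
  have xNorth: "xN \<phi> w \<bullet> pd \<phi> j w = 0" if w: "w \<in> U" for j w
    by (simp add: xN_def inner_diff_left xTorth[OF w])
  have key: "lie_xT \<phi> i j u / 2 = metric \<phi> i j u + shape_xN \<phi> i j u" if u: "u \<in> U" for u i j
  proof -
    have pxT: "pd (xT \<phi>) i u = (\<Sum>k\<in>UNIV. pd (tcoef \<phi> k) i u *\<^sub>R pd \<phi> k u + tcoef \<phi> k u *\<^sub>R pd (pd \<phi> k) i u)" for i
      unfolding xT_eq
      by (subst pd_sum) (simp_all add: pd_scaleR dtc[OF u] d1[OF u])
    have E3: "pd (xT \<phi>) i u \<bullet> pd \<phi> j u = (\<Sum>k\<in>UNIV. pd (tcoef \<phi> k) i u * metric \<phi> k j u + tcoef \<phi> k u * (pd (pd \<phi> k) i u \<bullet> pd \<phi> j u))" for i j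
      unfolding pxT by (simp add: inner_sum_left inner_add_left metric_def)
    have E4: "pd (metric \<phi> i j) k u = pd (pd \<phi> k) i u \<bullet> pd \<phi> j u + pd (pd \<phi> k) j u \<bullet> pd \<phi> i u" for i j k
      unfolding metric_eq using pd_inner[OF d1[OF u] d1[OF u], of i j k] sw[OF u, of i k] sw[OF u, of j k]
      by (simp add: inner_commute)
    have lie: "lie_xT \<phi> i j u = pd (xT \<phi>) i u \<bullet> pd \<phi> j u + pd (xT \<phi>) j u \<bullet> pd \<phi> i u"
      unfolding E3 lie_xT_def sum.distrib[symmetric]
      apply (rule sum.cong[OF refl])
      subgoal for k using msym[of i k u] E4[of i j k] by (simp add: algebra_simps)
      done
    have pxN: "pd (xN \<phi>) i u = pd \<phi> i u - pd (xT \<phi>) i u" for i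
      unfolding xN_eq by (rule pd_diff[OF d0[OF u] dxT[OF u]])
    have sh1: "shape_xN \<phi> i j u = pd (xT \<phi>) i u \<bullet> pd \<phi> j u - metric \<phi> i j u" for i j
      by (simp add: shape_xN_def pxN inner_diff_left metric_def)
    have sh2: "shape_xN \<phi> i j u = xN \<phi> u \<bullet> pd (pd \<phi> j) i u" for i j
    proof -
      have "pd (\<lambda>w. xN \<phi> w \<bullet> pd \<phi> j w) i u = pd (\<lambda>w. 0::real) i u"
        by (rule pd_cong_open[OF U u]) (simp add: xNorth)
      then have "pd (xN \<phi>) i u \<bullet> pd \<phi> j u + xN \<phi> u \<bullet> pd (pd \<phi> j) i u = 0"
        using pd_inner[OF dxN[OF u] d1[OF u]] pd_const by simp
      then show ?thesis by (simp add: shape_xN_def)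
    qed
    have symm: "shape_xN \<phi> j i u = shape_xN \<phi> i j u"
      unfolding sh2 using sw[OF u, of i j] by simp
    show ?thesis unfolding lie using sh1[of i j] sh1[of j i] symm msym[of j i u] by simp
  qed
  have pt: "(lie_xT \<phi> i j u / 2 + \<beta> u * ric \<phi> i j u
             = \<gamma> u * metric \<phi> i j u + \<delta> u * (xT \<phi> u \<bullet> pd \<phi> i u) * (xT \<phi> u \<bullet> pd \<phi> j u))
     \<longleftrightarrow> (\<beta> u * ric \<phi> i j u
             = (\<gamma> u - 1) * metric \<phi> i j u + \<delta> u * (xT \<phi> u \<bullet> pd \<phi> i u) * (xT \<phi> u \<bullet> pd \<phi> j u)
               - shape_xN \<phi> i j u)" if u: "u \<in> U" for u i j
    unfolding key[OF u] by (auto simp: algebra_simps)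
  show ?thesis using pt by blast
qed

end
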